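(* Let $q$ be a power of $2$. For $i=1,\dots,k$, let $b_i\in\mathbb{F}_q^*$, let $\delta\in\mathbb{F}_{q^2}$, and let $s_i$ be positive integers with $s_iq\equiv s_i\pmod{q^2-1}$. Then the polynomial $$P(x)=\sum_{i=1}^k b_i(x^q+x+\delta)^{s_i}+x$$ is an involution over $\mathbb{F}_{q^2}$.
   Context: A polynomial $P$ is an involution over $\mathbb{F}_{q^2}$ if it is a permutation polynomial of $\mathbb{F}_{q^2}$ equal to its own compositional inverse, i.e. $P(P(c))=c$ for all $c\in\mathbb{F}_{q^2}$. *)

theory Defs
  imports "HOL-Computational_Algebra.Polynomial" "HOL-Number_Theory.Cong" "HOL-Library.Cardinality"
begin

text \<open>A polynomial over a finite field (the whole type 'a, playing the role of F_{q^2})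
  is an involution if it induces a permutation of the field that is its own inverse.\<close>
definition involution_poly :: "'a::{finite,field} poly \<Rightarrow> bool" where
  "involution_poly P \<longleftrightarrow> bij (poly P) \<and> (\<forall>c. poly P (poly P c) = c)"

end

theory Submission
  imports Defs 
begin

lemma ff_pow_card:
  fixes x :: "'a::{finite,field}"
  shows "x ^ CARD('a) = x"
proof (cases "x = 0")
  case False
  have "x * (\<Prod>y\<in>UNIV-{0}. x * y) = x * x ^ (card (UNIV :: 'a set) - 1) * \<Prod>(UNIV-{0})"
    by (simp add: prod.distrib mult_ac)
  also have "x * x ^ (card (UNIV :: 'a set) - 1) = x ^ Suc (card (UNIV :: 'a set) - 1)"
    by (subst power_Suc) auto
  also have "Suc (card (UNIV :: 'a set) - 1) = card (UNIV :: 'a set)"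
    using finite_UNIV_card_ge_0[where ?'a = 'a] by simp
  also have "(\<Prod>y\<in>UNIV-{0}. x * y) = (\<Prod>y\<in>UNIV-{0}. y)"
    by (rule prod.reindex_bij_witness[of _ "\<lambda>y. y / x" "\<lambda>y. x * y"]) (use False in auto)
  finally show ?thesis
    by simp
qed (use finite_UNIV_card_ge_0[where ?'a = 'a] in auto)

lemma char2:
  assumes "CARD('a::{finite,field}) = 2 ^ n"
  shows "(2::'a) = 0"
proof -
  have "(\<Sum>x\<in>(UNIV::'a set). x) = (\<Sum>x\<in>UNIV. x + 1)"
    by (rule sum.reindex_bij_witness[of _ "\<lambda>y. y + 1" "\<lambda>y. y - 1"]) auto
  also have "\<dots> = (\<Sum>x\<in>(UNIV::'a set). x) + of_nat CARD('a)"
    by (simp add: sum.distrib)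
  finally have "of_nat CARD('a) = (0::'a)" by simp
  then have "(2::'a) ^ n = 0" using assms by simp
  then show ?thesis by (metis power_eq_0_iff)
qed

lemma frob2:
  fixes a b :: "'a::field"
  assumes "(2::'a) = 0"
  shows "(a + b) ^ (2 ^ m) = a ^ (2 ^ m) + b ^ (2 ^ m)"
proof (induction m)
  case 0 then show ?case by simp
next
  case (Suc m)
  have sq: "(u + v) ^ 2 = u ^ 2 + v ^ 2" for u v :: 'a
  proof -
    have "(u + v) ^ 2 = u ^ 2 + v ^ 2 + 2 * u * v" by (simp add: power2_eq_square algebra_simps)
    then show ?thesis using assms by simp
  qed
  have "(a + b) ^ (2 ^ Suc m) = ((a + b) ^ (2 ^ m)) ^ 2" by (simp add: power_mult[symmetric] mult.commute)
  also have "\<dots> = (a ^ (2 ^ m) + b ^ (2 ^ m)) ^ 2" using Suc by simp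
  also have "\<dots> = a ^ (2 ^ Suc m) + b ^ (2 ^ Suc m)" by (simp add: sq power_mult[symmetric] mult.commute)
  finally show ?case .
qed

lemma frob_sum:
  fixes f :: "nat \<Rightarrow> 'a::field"
  assumes "(2::'a) = 0"
  shows "(\<Sum>i\<in>A. f i) ^ (2 ^ m) = (\<Sum>i\<in>A. f i ^ (2 ^ m))"
proof (induction A rule: infinite_finite_induct)
  case (insert x F)
  then show ?case by (simp add: frob2[OF assms])
qed simp_all

theorem theorem3p1:
  fixes q k :: nat and b :: "nat \<Rightarrow> 'a::{finite,field}" and s :: "nat \<Rightarrow> nat"
    and \<delta> :: 'a
  assumes q_pow2: "\<exists>m\<ge>1. q = 2 ^ m"
    and card: "CARD('a) = q ^ 2"
    and b_Fq: "\<forall>i\<in>{1..k}. b i ^ q = b i \<and> b i \<noteq> 0"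
    and s_pos: "\<forall>i\<in>{1..k}. s i > 0"
    and s_cong: "\<forall>i\<in>{1..k}. [s i * q = s i] (mod (q ^ 2 - 1))"
  shows "involution_poly
           ((\<Sum>i\<in>{1..k}. smult (b i) ((monom 1 q + [:\<delta>, 1:]) ^ s i)) + [:0, 1:])"
proof -
  obtain m where m: "m \<ge> 1" "q = 2 ^ m" using q_pow2 by blast
  have two: "(2::'a) = 0"
    using char2[of "2 * m"] card m by (simp add: power_mult[symmetric] mult.commute)
  have addself: "u + u = 0" for u :: 'a
  proof -
    have "u + u = 2 * u" by simp
    then show ?thesis using two by simp
  qed
  have "(2::nat) ^ 1 \<le> 2 ^ m" using m(1) by (intro power_increasing) auto
  then have q1: "q \<ge> 2" using m(2) by simp
  define Y where "Y x = x ^ q + x + \<delta>" for x :: 'a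
  define F where "F x = x + (\<Sum>i\<in>{1..k}. b i * Y x ^ s i)" for x :: 'a
  let ?P = "(\<Sum>i\<in>{1..k}. smult (b i) ((monom 1 q + [:\<delta>, 1:]) ^ s i)) + [:0, 1:]"
  have polyP: "poly ?P x = F x" for x
    by (simp add: F_def Y_def poly_sum poly_monom algebra_simps)
  have fermat: "y ^ (q ^ 2) = y" for y :: 'a using ff_pow_card[of y] card by simp
  have ypow: "y ^ (s i * q) = y ^ s i" if i: "i \<in> {1..k}" for i and y :: 'a
  proof -
    have c: "[s i * q = s i] (mod (q ^ 2 - 1))" using s_cong i by blast
    have le: "s i \<le> s i * q" using q1 by simp
    obtain t where t: "s i * q = t * (q ^ 2 - 1) + s i"
      using iffD1[OF cong_le_nat[OF le] c] by blast
    show ?thesis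
    proof (cases "y = 0")
      case True
      have "s i > 0" using s_pos i by blast
      moreover have "s i * q > 0" using calculation q1 by simp
      ultimately show ?thesis using True by (simp add: zero_power)
    next
      case False
      have one: "y ^ (q ^ 2 - 1) = 1"
      proof -
        have e: "Suc (q ^ 2 - 1) = q ^ 2" using q1 by (simp add: Suc_diff_1)
        have "y * y ^ (q ^ 2 - 1) = y ^ Suc (q ^ 2 - 1)" by (simp only: power_Suc)
        also have "\<dots> = y" by (simp only: e fermat)
        finally have "y * y ^ (q ^ 2 - 1) = y * 1" by simp
        then show ?thesis using False by (metis mult_left_cancel)
      qed
      have "y ^ (s i * q) = (y ^ (q ^ 2 - 1)) ^ t * y ^ s i"
        by (simp only: t power_add power_mult mult.commute[of t])
      then show ?thesis by (simp only: one power_one mult_1_left)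
    qed
  qed
  have YF: "Y (F x) = Y x" for x
  proof -
    have "(F x) ^ q = x ^ q + (\<Sum>i\<in>{1..k}. (b i * Y x ^ s i) ^ q)"
      unfolding F_def m(2) by (simp add: frob2[OF two] frob_sum[OF two])
    also have "(\<Sum>i\<in>{1..k}. (b i * Y x ^ s i) ^ q) = (\<Sum>i\<in>{1..k}. b i * Y x ^ s i)"
    proof (rule sum.cong)
      fix i assume i: "i \<in> {1..k}"
      have "(b i * Y x ^ s i) ^ q = b i ^ q * Y x ^ (s i * q)"
        by (simp add: power_mult_distrib power_mult)
      then show "(b i * Y x ^ s i) ^ q = b i * Y x ^ s i" using b_Fq i ypow[OF i] by simp
    qed simp
    finally have "Y (F x) = x ^ q + x + \<delta> + ((\<Sum>i\<in>{1..k}. b i * Y x ^ s i) + (\<Sum>i\<in>{1..k}. b i * Y x ^ s i))"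
      unfolding Y_def F_def by (simp add: algebra_simps)
    then show ?thesis using addself Y_def by simp
  qed
  have inv: "F (F x) = x" for x
  proof -
    have "F (F x) = F x + (\<Sum>i\<in>{1..k}. b i * Y (F x) ^ s i)"
      by (simp only: F_def[of "F x"])
    also have "\<dots> = F x + (\<Sum>i\<in>{1..k}. b i * Y x ^ s i)" by (simp only: YF)
    finally have "F (F x) = x + ((\<Sum>i\<in>{1..k}. b i * Y x ^ s i) + (\<Sum>i\<in>{1..k}. b i * Y x ^ s i))"
      by (simp add: F_def[of x] add.assoc)
    then show ?thesis using addself by simp
  qed
  have "bij F" using inv by (metis bijI' )
  moreover have "poly ?P = F" using polyP by (rule ext)
  ultimately show ?thesis unfolding involution_poly_def using inv by simp
qed

end
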